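(* Assume the setting described in the context. Then for every $k\in\mathbb{N}$, $$f^{-k}(U\setminus J_f)=\bigcup_{\epsilon^k\in\Sigma_d^k}\phi(V_{\epsilon^k}).$$
   Context: Setting: $U\subset\mathbb{C}$ is a domain conformally isomorphic to $\mathbb{D}$; $U'=U_1\cup\dots\cup U_N$ is relatively compact in $U$, with the $U_i$ pairwise disjoint domains each conformally isomorphic to $\mathbb{D}$; $f:U'\to U$ is a proper holomorphic map of degree $d>1$ (sum of the degrees of $f:U_i\to U$); $K_f=\{z\in U': f^n(z)\in U'\ \forall n\}$, $J_f=\partial K_f$, and it is assumed that $K_f=J_f$ is a Cantor set containing all critical points of $f$. Fix $w\in U\setminus U'$, let $w_0,\dots,w_{d-1}$ be its $d$ distinct preimages under $f$, and let $i(j)$ be defined by $w_j\in U_{i(j)}$. Let $\phi:\mathbb{D}\to U\setminus J_f$ be a universal covering with $\phi(0)=w$, and let $\Gamma$ be its deck transformation group. For each $i$ fix a connected component $V_i$ of $\phi^{-1}(U_i\setminus J_f)$, and let $g_0,\dots,g_{d-1}:\mathbb{D}\to\mathbb{D}$ be univalent holomorphic maps with $f\circ\phi\circ g_j=\phi$, $\phi(g_j(0))=w_j$ and $g_j(\mathbb{D})=V_{i(j)}$. Let $\Sigma_d^k=\{0,\dots,d-1\}^k$ and, for $\epsilon^k=(\epsilon_1,\dots,\epsilon_k)$, $\sigma(\epsilon^k)=(\epsilon_2,\dots,\epsilon_k)$. Fix families $\{\gamma_l^{\epsilon^k}\}_{l=1}^k\subset\Gamma$ ($\epsilon^k\in\Sigma_d^k$,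 $k\in\mathbb{N}$) and put $V_{\epsilon^k}=\gamma_1^{\epsilon^k}\circ g_{\epsilon_1}\circ\dots\circ\gamma_k^{\epsilon^k}\circ g_{\epsilon_k}(\mathbb{D})$, such that: (1) $V_{\epsilon^k}\subset V_{\epsilon^{k-1}}$ for $k\ge2$, with $\epsilon^{k-1}=(\epsilon_1,\dots,\epsilon_{k-1})$; (2) $\gamma_l^{\epsilon^k}=\gamma_{l-1}^{\sigma(\epsilon^k)}$ for $k\ge2$, $2\le l\le k$; (3) $\phi(V_{\epsilon^k})=\phi(V_{\widehat\epsilon^k})$ implies $V_{\epsilon^k}=V_{\widehat\epsilon^k}$ (such families exist). *)

theory Defs
  imports "HOL-Complex_Analysis.Complex_Analysis"
begin

abbreviation unit_disc :: "complex set" where "unit_disc \<equiv> ball 0 1"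

definition conf_disc :: "complex set \<Rightarrow> bool" where
  "conf_disc U \<longleftrightarrow> open U \<and> connected U \<and>
     (\<exists>h h'. h holomorphic_on unit_disc \<and> h' holomorphic_on U \<and>
        h ` unit_disc = U \<and> h' ` U = unit_disc \<and>
        (\<forall>z\<in>unit_disc. h' (h z) = z) \<and> (\<forall>u\<in>U. h (h' u) = u))"

definition proper_map_on :: "(complex \<Rightarrow> complex) \<Rightarrow> complex set \<Rightarrow> complex set \<Rightarrow> bool" where
  "proper_map_on f S T \<longleftrightarrow> f ` S \<subseteq> T \<and>
     (\<forall>K. compact K \<and> K \<subseteq> T \<longrightarrow> compact {z\<in>S. f z \<in> K})"

definition deg_count :: "(complex \<Rightarrow> complex) \<Rightarrow> complex set \<Rightarrow> complex \<Rightarrow> nat" where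
  "deg_count f S w = (\<Sum>z\<in>{z\<in>S. f z = w}. nat (zorder (\<lambda>x. f x - w) z))"

definition filled_set :: "(complex \<Rightarrow> complex) \<Rightarrow> complex set \<Rightarrow> complex set" where
  "filled_set f U' = {z\<in>U'. \<forall>n. (f ^^ n) z \<in> U'}"

definition cantor_set :: "complex set \<Rightarrow> bool" where
  "cantor_set K \<longleftrightarrow> K \<noteq> {} \<and> compact K \<and> (\<forall>x\<in>K. x islimpt K) \<and>
     (\<forall>C. C \<subseteq> K \<and> connected C \<longrightarrow> (\<exists>a. C \<subseteq> {a}))"

definition deck_group :: "(complex \<Rightarrow> complex) \<Rightarrow> (complex \<Rightarrow> complex) set" where
  "deck_group phi = {\<gamma>. (\<exists>\<gamma>'. homeomorphism unit_disc unit_disc \<gamma> \<gamma>') \<and>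
                        (\<forall>z\<in>unit_disc. phi (\<gamma> z) = phi z)}"

definition Sigma_words :: "nat \<Rightarrow> nat \<Rightarrow> nat list set" where
  "Sigma_words d k = {es. length es = k \<and> (\<forall>e\<in>set es. e < d)}"

text \<open>V_eps = gamma_1 o g_{eps_1} o ... o gamma_k o g_{eps_k} (unit disc).\<close>
definition V_word :: "(nat list \<Rightarrow> nat \<Rightarrow> complex \<Rightarrow> complex) \<Rightarrow> (nat \<Rightarrow> complex \<Rightarrow> complex)
                      \<Rightarrow> nat list \<Rightarrow> complex set" where
  "V_word gam g es =
     foldr (\<circ>) (map (\<lambda>l. gam es (Suc l) \<circ> g (es ! l)) [0..<length es]) id ` unit_disc"

definition preimage_iter :: "(complex \<Rightarrow> complex) \<Rightarrow> complex set \<Rightarrow> nat \<Rightarrow> complex set \<Rightarrow> complex set" where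
  "preimage_iter f U' k A = {z. (\<forall>j<k. (f ^^ j) z \<in> U') \<and> (f ^^ k) z \<in> A}"

end

theory Submission
  imports Defs
begin

lemma foldr_step:
  "foldr (\<circ>) (map F [0..<Suc n]) id x = F 0 (foldr (\<circ>) (map (\<lambda>i. F (Suc i)) [0..<n]) id x)"
  by (simp only: map_upt_Suc foldr_Cons o_apply)

lemma fold_good:
  fixes F :: "nat \<Rightarrow> complex \<Rightarrow> complex"
  assumes "\<And>l x. l < n \<Longrightarrow> x \<in> unit_disc \<Longrightarrow> F l x \<in> unit_disc \<and> phi (F l x) \<in> U' \<and> f (phi (F l x)) = phi x"
    and "x \<in> unit_disc"
  shows "foldr (\<circ>) (map F [0..<n]) id x \<in> unit_disc \<and> (\<forall>j<n. (f^^j) (phi (foldr (\<circ>) (map F [0..<n]) id x)) \<in> U')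
     \<and> (f^^n) (phi (foldr (\<circ>) (map F [0..<n]) id x)) = phi x"
  using assms
proof (induction n arbitrary: F)
  case 0
  then show ?case by simp
next
  case (Suc n)
  define u where "u = foldr (\<circ>) (map (\<lambda>i. F (Suc i)) [0..<n]) id x"
  have IH: "u \<in> unit_disc \<and> (\<forall>j<n. (f^^j) (phi u) \<in> U') \<and> (f^^n) (phi u) = phi x"
    unfolding u_def by (rule Suc.IH) (use Suc.prems in auto)
  have eq: "foldr (\<circ>) (map F [0..<Suc n]) id x = F 0 u"
    unfolding u_def by (rule foldr_step)
  have F0: "F 0 u \<in> unit_disc" "phi (F 0 u) \<in> U'" "f (phi (F 0 u)) = phi u"
    using Suc.prems(1)[of 0 u] IH by auto
  have "\<forall>j<Suc n. (f^^j) (phi (F 0 u)) \<in> U'"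
  proof (intro allI impI)
    fix j assume "j < Suc n"
    show "(f^^j) (phi (F 0 u)) \<in> U'"
    proof (cases j)
      case 0 then show ?thesis using F0 by simp
    next
      case (Suc i) then show ?thesis using F0 IH \<open>j < Suc n\<close>
        by (simp add: funpow_Suc_right del: funpow.simps)
    qed
  qed
  moreover have "(f^^Suc n) (phi (F 0 u)) = phi x"
    using F0 IH by (simp only: funpow_Suc_right o_apply)
  ultimately show ?case unfolding eq using F0 by blast
qed

lemma fold_cong:
  fixes F G :: "nat \<Rightarrow> complex \<Rightarrow> complex"
  assumes "\<And>l x. l < n \<Longrightarrow> x \<in> unit_disc \<Longrightarrow> F l x = G l x \<and> G l x \<in> unit_disc"
    and "x \<in> unit_disc"
  shows "foldr (\<circ>) (map F [0..<n]) id x = foldr (\<circ>) (map G [0..<n]) id x \<and> foldr (\<circ>) (map G [0..<n]) id x \<in> unit_disc"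
  using assms
proof (induction n arbitrary: F G)
  case 0
  then show ?case by simp
next
  case (Suc n)
  have IH: "foldr (\<circ>) (map (\<lambda>i. F (Suc i)) [0..<n]) id x = foldr (\<circ>) (map (\<lambda>i. G (Suc i)) [0..<n]) id x
     \<and> foldr (\<circ>) (map (\<lambda>i. G (Suc i)) [0..<n]) id x \<in> unit_disc"
    by (rule Suc.IH) (use Suc.prems in auto)
  show ?case unfolding foldr_step using IH Suc.prems(1)[of 0] by simp
qed

lemma zorder_one:
  assumes "f holomorphic_on S" "open S" "x \<in> S" "deriv f x \<noteq> 0" "f x = v"
  shows "zorder (\<lambda>u. f u - v) x = 1"
proof -
  have hd: "(f has_field_derivative deriv f x) (at x)"
    using assms holomorphic_derivI by blast
  have "((\<lambda>u. f u - v) has_field_derivative deriv f x) (at x)"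
    using hd by (auto intro!: derivative_eq_intros)
  then have dd: "deriv (\<lambda>u. f u - v) x = deriv f x" by (rule DERIV_imp_deriv)
  show ?thesis
    by (rule zorder_zero_eqI[of _ S]) (use assms dd in \<open>auto intro!: holomorphic_intros\<close>)
qed

lemma key:
  fixes f phi :: "complex \<Rightarrow> complex" and g :: "nat \<Rightarrow> complex \<Rightarrow> complex"
  assumes oU': "open U'" and holf: "f holomorphic_on U'"
    and noncrit: "\<And>x. x \<in> U' \<Longrightarrow> x \<notin> K \<Longrightarrow> deriv f x \<noteq> 0"
    and deg: "\<And>v. v \<in> U \<Longrightarrow> (\<Sum>x\<in>{x\<in>U'. f x = v}. nat (zorder (\<lambda>u. f u - v) x)) = d"
    and d1: "d > 1"
    and gD: "\<And>j x. j < d \<Longrightarrow> x \<in> unit_disc \<Longrightarrow> g j x \<in> unit_disc"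
    and gU: "\<And>j x. j < d \<Longrightarrow> x \<in> unit_disc \<Longrightarrow> phi (g j x) \<in> U' \<and> phi (g j x) \<notin> K"
    and glift: "\<And>j x. j < d \<Longrightarrow> x \<in> unit_disc \<Longrightarrow> f (phi (g j x)) = phi x"
    and cphi: "continuous_on unit_disc phi"
    and cg: "\<And>j. j < d \<Longrightarrow> continuous_on unit_disc (g j)"
    and g0: "\<And>j j'. j < d \<Longrightarrow> j' < d \<Longrightarrow> j \<noteq> j' \<Longrightarrow> phi (g j 0) \<noteq> phi (g j' 0)"
    and phiU: "phi ` unit_disc \<subseteq> U"
    and z: "z \<in> U'" "z \<notin> K" and y: "y \<in> unit_disc" "f z = phi y"
  shows "\<exists>e<d. phi (g e y) = z"
proof -
  have distinct: "phi (g j x) \<noteq> phi (g j' x)" if jj: "j < d" "j' < d" "j \<noteq> j'" and x: "x \<in> unit_disc" for j j' x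
  proof -
    define h1 where "h1 = (\<lambda>u. phi (g j u))"
    define h2 where "h2 = (\<lambda>u. phi (g j' u))"
    have c1: "continuous_on unit_disc h1" unfolding h1_def
      by (rule continuous_on_compose2[OF cphi cg[OF jj(1)]]) (use gD jj in auto)
    have c2: "continuous_on unit_disc h2" unfolding h2_def
      by (rule continuous_on_compose2[OF cphi cg[OF jj(2)]]) (use gD jj in auto)
    define A where "A = {u\<in>unit_disc. h1 u - h2 u = 0}"
    have clA: "closedin (top_of_set unit_disc) A"
      unfolding A_def by (rule continuous_closedin_preimage_constant) (intro continuous_intros c1 c2)
    have "open A"
    proof (subst open_subopen, intro ballI)
      fix u assume uA: "u \<in> A"
      then have u: "u \<in> unit_disc" "h1 u = h2 u" unfolding A_def by auto
      let ?p = "h1 u"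
      have pU: "?p \<in> U'" "?p \<notin> K" using gU[OF jj(1) u(1)] unfolding h1_def by auto
      obtain r where r: "r > 0" "ball ?p r \<subseteq> U'" "inj_on f (ball ?p r)"
        using has_complex_derivative_locally_injective[OF holf pU(1) oU' noncrit[OF pU]] by blast
      define T where "T = (unit_disc \<inter> h1 -` ball ?p r) \<inter> (unit_disc \<inter> h2 -` ball ?p r)"
      have "open T" unfolding T_def
        by (intro open_Int continuous_open_preimage c1 c2) auto
      moreover have "u \<in> T" unfolding T_def using u r by auto
      moreover have "T \<subseteq> A"
      proof
        fix t assume t: "t \<in> T"
        then have "t \<in> unit_disc" "h1 t \<in> ball ?p r" "h2 t \<in> ball ?p r" unfolding T_def by auto
        moreover have "f (h1 t) = f (h2 t)" unfolding h1_def h2_def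
          using glift jj \<open>t \<in> unit_disc\<close> by simp
        ultimately show "t \<in> A" using r(3) unfolding A_def inj_on_def by auto
      qed
      ultimately show "\<exists>T. open T \<and> u \<in> T \<and> T \<subseteq> A" by blast
    qed
    have "A \<subseteq> unit_disc" by (auto simp: A_def)
    then have opA: "openin (top_of_set unit_disc) A"
      using open_subset \<open>open A\<close> by blast
    have "A = {} \<or> A = unit_disc"
      using connected_clopen[THEN iffD1, OF convex_connected[OF convex_ball], rule_format, OF conjI[OF opA clA]] by blast
    moreover have "0 \<notin> A" using g0[OF jj] unfolding A_def h1_def h2_def by auto
    ultimately have "A = {}" by auto
    then show ?thesis using x unfolding A_def h1_def h2_def by auto
  qed
  show ?thesis
  proof (rule ccontr)
    assume nz: "\<not> (\<exists>e<d. phi (g e y) = z)"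
    define v where "v = phi y"
    have vU: "v \<in> U" using phiU y unfolding v_def by auto
    define P where "P = {x\<in>U'. f x = v}"
    define t where "t = (\<lambda>x. nat (zorder (\<lambda>u. f u - v) x))"
    have sumP: "sum t P = d" using deg[OF vU] unfolding P_def t_def by simp
    then have finP: "finite P" using d1 by (metis not_one_less_zero sum.infinite zero_less_iff_neq_zero less_trans zero_less_one)
    define S where "S = insert z ((\<lambda>e. phi (g e y)) ` {..<d})"
    have SP: "S \<subseteq> P" unfolding S_def P_def v_def using gU glift y z by auto
    have injS: "inj_on (\<lambda>e. phi (g e y)) {..<d}"
      unfolding inj_on_def using distinct y by auto
    have cardS: "card S = Suc d" unfolding S_def
      using nz injS by (subst card_insert_disjoint) (auto simp: card_image)
    have t1: "t x = 1" if "x \<in> S" for x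
    proof -
      have "x \<in> U'" "x \<notin> K" "f x = v" using that z y gU glift unfolding S_def v_def by auto
      then show ?thesis unfolding t_def using zorder_one[OF holf oU' \<open>x \<in> U'\<close> noncrit] by simp
    qed
    have "sum t S \<le> sum t P" by (rule sum_mono2[OF finP SP]) auto
    moreover have "sum t S = Suc d" using t1 cardS by simp
    ultimately show False using sumP by simp
  qed
qed

theorem mainTheorem4:
  fixes U :: "complex set" and Ui :: "nat \<Rightarrow> complex set" and N d :: nat
    and f phi :: "complex \<Rightarrow> complex" and w :: complex
    and ws :: "nat \<Rightarrow> complex" and ii :: "nat \<Rightarrow> nat"
    and V :: "nat \<Rightarrow> complex set" and g :: "nat \<Rightarrow> complex \<Rightarrow> complex"
    and gam :: "nat list \<Rightarrow> nat \<Rightarrow> complex \<Rightarrow> complex"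
  defines "U' \<equiv> (\<Union>i<N. Ui i)"
  defines "K \<equiv> filled_set f U'"
  defines "J \<equiv> frontier K"
  assumes U: "conf_disc U"
    and Ui: "\<And>i. i < N \<Longrightarrow> conf_disc (Ui i)"
    and Ui_disj: "\<And>i j. i < N \<Longrightarrow> j < N \<Longrightarrow> i \<noteq> j \<Longrightarrow> Ui i \<inter> Ui j = {}"
    and relcompact: "compact (closure U')" "closure U' \<subseteq> U"
    and f_hol: "f holomorphic_on U'"
    and f_proper: "proper_map_on f U' U"
    and f_deg: "\<And>v. v \<in> U \<Longrightarrow> deg_count f U' v = d"
    and d_gt: "d > 1"
    and KJ: "K = J"
    and cantor: "cantor_set K"
    and crit: "{z\<in>U'. deriv f z = 0} \<subseteq> K"
    and w: "w \<in> U - U'"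
    and ws_pre: "\<And>j. j < d \<Longrightarrow> f (ws j) = w"
    and ws_all: "{z\<in>U'. f z = w} = ws ` {..<d}"
    and ws_inj: "inj_on ws {..<d}"
    and ii: "\<And>j. j < d \<Longrightarrow> ii j < N \<and> ws j \<in> Ui (ii j)"
    and phi_hol: "phi holomorphic_on unit_disc"
    and phi_cov: "covering_space unit_disc phi (U - J)"
    and phi0: "phi 0 = w"
    and V: "\<And>i. i < N \<Longrightarrow> V i \<in> components {z\<in>unit_disc. phi z \<in> Ui i - J}"
    and g_hol: "\<And>j. j < d \<Longrightarrow> g j holomorphic_on unit_disc"
    and g_inj: "\<And>j. j < d \<Longrightarrow> inj_on (g j) unit_disc"
    and g_lift: "\<And>j z. j < d \<Longrightarrow> z \<in> unit_disc \<Longrightarrow> f (phi (g j z)) = phi z"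
    and g0: "\<And>j. j < d \<Longrightarrow> phi (g j 0) = ws j"
    and g_img: "\<And>j. j < d \<Longrightarrow> g j ` unit_disc = V (ii j)"
    and gam_deck: "\<And>es l. es \<in> Sigma_words d (length es) \<Longrightarrow> 1 \<le> l \<Longrightarrow> l \<le> length es
                     \<Longrightarrow> gam es l \<in> deck_group phi"
    and cond1: "\<And>es. es \<in> Sigma_words d (length es) \<Longrightarrow> length es \<ge> 2
                  \<Longrightarrow> V_word gam g es \<subseteq> V_word gam g (butlast es)"
    and cond2: "\<And>es l z. es \<in> Sigma_words d (length es) \<Longrightarrow> length es \<ge> 2
                  \<Longrightarrow> 2 \<le> l \<Longrightarrow> l \<le> length es \<Longrightarrow> z \<in> unit_disc
                  \<Longrightarrow> gam es l z = gam (tl es) (l - 1) z"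
    and cond3: "\<And>es es'. es \<in> Sigma_words d (length es) \<Longrightarrow> es' \<in> Sigma_words d (length es)
                  \<Longrightarrow> phi ` V_word gam g es = phi ` V_word gam g es'
                  \<Longrightarrow> V_word gam g es = V_word gam g es'"
  shows "\<forall>k\<ge>1. preimage_iter f U' k (U - J) = (\<Union>es\<in>Sigma_words d k. phi ` V_word gam g es)"
  proof -
  have JK: "J = K" using KJ by simp
  have oUi: "open (Ui i)" if "i < N" for i using Ui[OF that] unfolding conf_disc_def by blast
  have oU': "open U'" unfolding U'_def using oUi by auto
  have Kinv: "f x \<in> K" if "x \<in> K" for x
  proof -
    have "x \<in> U'" "\<And>n. (f^^n) x \<in> U'" using that unfolding K_def filled_set_def by auto
    have eqf: "\<And>n. (f^^n) (f x) = (f^^(Suc n)) x" by (simp only: funpow_Suc_right comp_apply)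
    have "(f^^1) x \<in> U'" using \<open>\<And>n. (f^^n) x \<in> U'\<close> by blast
    then have "f x \<in> U'" by simp
    moreover have "\<And>n. (f^^n) (f x) \<in> U'" unfolding eqf using \<open>\<And>n. (f^^n) x \<in> U'\<close> by blast
    ultimately have "f x \<in> U'" "\<And>n. (f^^n) (f x) \<in> U'" by blast+
    then show ?thesis unfolding K_def filled_set_def by auto
  qed
  have phiD: "phi ` unit_disc = U - K" using covering_space_imp_surjective[OF phi_cov] JK by simp
  have cphi: "continuous_on unit_disc phi" using covering_space_imp_continuous[OF phi_cov] .
  have VD: "V (ii j) \<subseteq> {z\<in>unit_disc. phi z \<in> Ui (ii j) - J}" if "j < d" for j
    using V[of "ii j"] ii[OF that] in_components_subset by blast
  have gD: "g j x \<in> unit_disc" if "j < d" "x \<in> unit_disc" for j x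
    using VD[OF that(1)] g_img[OF that(1)] that by blast
  have gU: "phi (g j x) \<in> U' \<and> phi (g j x) \<notin> K" if "j < d" "x \<in> unit_disc" for j x
  proof -
    have "phi (g j x) \<in> Ui (ii j) - J" using VD[OF that(1)] g_img[OF that(1)] that by blast
    then show ?thesis using ii[OF that(1)] JK unfolding U'_def by auto
  qed
  have deck: "\<gamma> x \<in> unit_disc \<and> phi (\<gamma> x) = phi x" if "\<gamma> \<in> deck_group phi" "x \<in> unit_disc" for \<gamma> x
    using that unfolding deck_group_def homeomorphism_def by blast
  have noncrit: "deriv f x \<noteq> 0" if "x \<in> U'" "x \<notin> K" for x using crit that by blast
  have deg: "(\<Sum>x\<in>{x\<in>U'. f x = v}. nat (zorder (\<lambda>u. f u - v) x)) = d" if "v \<in> U" for v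
    using f_deg[OF that] unfolding deg_count_def by simp
  have cg: "continuous_on unit_disc (g j)" if "j < d" for j
    using g_hol[OF that] by (rule holomorphic_on_imp_continuous_on)
  have g0d: "phi (g j 0) \<noteq> phi (g j' 0)" if "j < d" "j' < d" "j \<noteq> j'" for j j'
    using g0 ws_inj that unfolding inj_on_def by auto
  have KEY: "\<exists>e<d. phi (g e y) = z" if "z \<in> U'" "z \<notin> K" "y \<in> unit_disc" "f z = phi y" for z y
    by (rule key[OF oU' f_hol noncrit deg d_gt gD gU g_lift cphi cg g0d]) (use phiD that in auto)
  define F where "F = (\<lambda>es l. gam es (Suc l) \<circ> g (es ! l))"
  define W where "W = (\<lambda>es. foldr (\<circ>) (map (F es) [0..<length es]) id)"
  have VW: "V_word gam g es = W es ` unit_disc" for es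
    unfolding V_word_def W_def F_def by simp
  have Fgood: "F es l x \<in> unit_disc \<and> phi (F es l x) \<in> U' \<and> f (phi (F es l x)) = phi x"
    if es: "es \<in> Sigma_words d (length es)" and l: "l < length es" and x: "x \<in> unit_disc" for es l x
  proof -
    have e: "es ! l < d" using es l unfolding Sigma_words_def by auto
    have dk: "gam es (Suc l) \<in> deck_group phi" using gam_deck[OF es, of "Suc l"] l by simp
    show ?thesis unfolding F_def comp_def
      using deck[OF dk gD[OF e x]] gU[OF e x] g_lift[OF e x] gD[OF e x] by simp
  qed
  have Wgood: "W es x \<in> unit_disc \<and> (\<forall>j<length es. (f^^j) (phi (W es x)) \<in> U') \<and> (f^^length es) (phi (W es x)) = phi x"
    if "es \<in> Sigma_words d (length es)" "x \<in> unit_disc" for es x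
    unfolding W_def by (rule fold_good) (use Fgood that in auto)
  have sup: "(\<Union>es\<in>Sigma_words d k. phi ` V_word gam g es) \<subseteq> preimage_iter f U' k (U - J)" for k
  proof
    fix z assume "z \<in> (\<Union>es\<in>Sigma_words d k. phi ` V_word gam g es)"
    then obtain es x where es: "es \<in> Sigma_words d k" and x: "x \<in> unit_disc" and z: "z = phi (W es x)"
      unfolding VW by auto
    have len: "length es = k" using es unfolding Sigma_words_def by simp
    have "es \<in> Sigma_words d (length es)" using es len by simp
    from Wgood[OF this x] show "z \<in> preimage_iter f U' k (U - J)"
      unfolding preimage_iter_def z len using phiD JK x by auto
  qed
  have sub: "\<forall>z. z \<in> preimage_iter f U' (Suc m) (U - J) \<longrightarrow> (\<exists>es\<in>Sigma_words d (Suc m). \<exists>x\<in>unit_disc. z = phi (W es x))" for m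
  proof (induction m)
    case 0
    show ?case
    proof (intro allI impI)
      fix z assume "z \<in> preimage_iter f U' (Suc 0) (U - J)"
      then have z: "z \<in> U'" "f z \<in> U - K" unfolding preimage_iter_def JK by auto
      then have zK: "z \<notin> K" using Kinv by blast
      obtain y where y: "y \<in> unit_disc" "f z = phi y" using z phiD by (metis imageE)
      obtain e where e: "e < d" "phi (g e y) = z" using KEY[OF z(1) zK y] by blast
      have es: "[e] \<in> Sigma_words d (Suc 0)" using e unfolding Sigma_words_def by simp
      have dk: "gam [e] 1 \<in> deck_group phi" using gam_deck[of "[e]" 1] es by simp
      have "W [e] y = gam [e] 1 (g e y)" unfolding W_def F_def by simp
      then have "phi (W [e] y) = z" using deck[OF dk gD[OF e(1) y(1)]] e by simp
      then show "\<exists>es\<in>Sigma_words d (Suc 0). \<exists>x\<in>unit_disc. z = phi (W es x)" using es y by metis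
    qed
  next
    case (Suc m)
    show ?case
    proof (intro allI impI)
      fix z assume zP: "z \<in> preimage_iter f U' (Suc (Suc m)) (U - J)"
      have "f z \<in> preimage_iter f U' (Suc m) (U - J)"
      proof -
        have eqf: "\<And>n. (f^^n) (f z) = (f^^(Suc n)) z" by (simp only: funpow_Suc_right comp_apply)
        have A1: "\<And>j. j < Suc (Suc m) \<Longrightarrow> (f^^j) z \<in> U'" and A2: "(f^^Suc (Suc m)) z \<in> U - J"
          using zP unfolding preimage_iter_def mem_Collect_eq by blast+
        show ?thesis unfolding preimage_iter_def mem_Collect_eq eqf
        proof (intro conjI allI impI)
          fix j :: nat assume "j < Suc m"
          then show "(f^^Suc j) z \<in> U'" using A1[of "Suc j"] by linarith
        qed (rule A2)
      qed
      then obtain es' x where es': "es' \<in> Sigma_words d (Suc m)" and x: "x \<in> unit_disc"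
        and fz: "f z = phi (W es' x)" using Suc.IH by blast
      have len': "length es' = Suc m" using es' unfolding Sigma_words_def by simp
      have es'': "es' \<in> Sigma_words d (length es')" using es' len' by simp
      define y where "y = W es' x"
      have y: "y \<in> unit_disc" using Wgood[OF es'' x] unfolding y_def by blast
      have "(f^^0) z \<in> U'" using zP unfolding preimage_iter_def by blast
      then have z: "z \<in> U'" by simp
      have "f z \<in> U - K" using fz y phiD unfolding y_def by auto
      then have zK: "z \<notin> K" using Kinv by blast
      obtain e where e: "e < d" "phi (g e y) = z" using KEY[OF z zK y] fz unfolding y_def by blast
      define es where "es = e # es'"
      have es: "es \<in> Sigma_words d (Suc (Suc m))" using e es' unfolding es_def Sigma_words_def by simp
      have lenes: "length es = Suc (Suc m)" using len' es_def by simp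
      have esL: "es \<in> Sigma_words d (length es)" using es lenes by simp
      have inner: "foldr (\<circ>) (map (\<lambda>i. F es (Suc i)) [0..<length es']) id x = foldr (\<circ>) (map (F es') [0..<length es']) id x
         \<and> foldr (\<circ>) (map (F es') [0..<length es']) id x \<in> unit_disc"
      proof (rule fold_cong[OF _ x])
        fix l u assume l: "l < length es'" and u: "u \<in> unit_disc"
        have el: "es' ! l < d" using es' l unfolding Sigma_words_def by auto
        have "gam es (Suc (Suc l)) (g (es' ! l) u) = gam (tl es) (Suc (Suc l) - 1) (g (es' ! l) u)"
          by (rule cond2[OF esL]) (use lenes l len' gD[OF el u] in auto)
        then have "F es (Suc l) u = F es' l u" unfolding F_def es_def by simp
        then show "F es (Suc l) u = F es' l u \<and> F es' l u \<in> unit_disc" using Fgood[OF es'' l u] by simp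
      qed
      have "W es x = F es 0 (foldr (\<circ>) (map (\<lambda>i. F es (Suc i)) [0..<length es']) id x)"
        unfolding W_def lenes using len' foldr_step by metis
      also have "\<dots> = F es 0 y" using inner unfolding y_def W_def by simp
      also have "\<dots> = gam es 1 (g e y)" unfolding F_def es_def by simp
      finally have Wes: "W es x = gam es 1 (g e y)" .
      have dk: "gam es 1 \<in> deck_group phi" using gam_deck[OF esL, of 1] lenes by simp
      have "phi (W es x) = z" using deck[OF dk gD[OF e(1) y]] e Wes by simp
      then show "\<exists>es\<in>Sigma_words d (Suc (Suc m)). \<exists>x\<in>unit_disc. z = phi (W es x)" using es x by metis
    qed
  qed
  show ?thesis
  proof (intro allI impI)
    fix k :: nat assume "k \<ge> 1"
    then obtain m where k: "k = Suc m" by (metis Suc_le_D One_nat_def)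
    show "preimage_iter f U' k (U - J) = (\<Union>es\<in>Sigma_words d k. phi ` V_word gam g es)"
    proof
      show "preimage_iter f U' k (U - J) \<subseteq> (\<Union>es\<in>Sigma_words d k. phi ` V_word gam g es)"
        using sub[of m] unfolding k VW by blast
    qed (rule sup)
  qed
qed

end
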